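(* Let $(X,\rho)$ be an $F$-space and $(Y,d)$ a metric vector space with translation-invariant non-decreasing metric $d$. Let $T:X\to Y$ and $T_n:X\to Y$ ($n\in\mathbb{N}$) be continuous linear operators. The following are equivalent: (i) $T_nx\to Tx$ for every $x\in X$, but $\{T_n\}$ does not converge almost arbitrarily slowly to $T$; (ii) there exist $\{\varepsilon_n\}\searrow0$ and $r_0>0$ such that $(T_n-T)(B_\rho(0,r_0))\subseteq B_d(0,\varepsilon_n)$ for all $n\in\mathbb{N}$. In particular, if (i) holds then $\{T_n\}$ converges to $T$ in the topology of bounded convergence. Finally, if $X$ is locally bounded, then (i) and (ii) are equivalent to (iii) $\{T_n\}$ converges to $T$ in the topology of bounded convergence.
   Context: An $F$-space is a complete metric vector space with translation-invariant metric. $d$ is non-decreasing if $d(\alpha y,0)\le d(y,0)$ for $0\le\alpha\le1$. $B_\rho(x,r)=\{z:\rho(x,z)\le r\}$, similarly $B_d$. A sequence of operators $T_n$ converges almost arbitrarily slowly to $T$ if (C1) $\lim_n d(T_nx,Tx)=0$ for all $x\in X$ and (C2) for every non-increasing sequence $\{\varepsilon_n\}$ of nonnegative reals tending to $0$ there exists $x\in X$ with $d(T_nx,Tx)\ge\varepsilon_n$ for infinitely many $n$. The topology of bounded convergence is the topology of uniform convergence on bounded subsets of $X$, where $A\subseteq X$ is bounded if for every $r>0$ there is $\lambda>0$ with $A\subseteq\lambda B_\rho(0,r)$. $\{\varepsilon_n\}\searrow0$ means a non-increasing sequence of nonnegative reals converging to $0$. *)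

theory Defs
  imports "HOL-Analysis.Analysis"
begin

definition metric_fun :: "('a \<Rightarrow> 'a \<Rightarrow> real) \<Rightarrow> bool" where
  "metric_fun \<rho> \<longleftrightarrow>
     (\<forall>x y. \<rho> x y = 0 \<longleftrightarrow> x = y) \<and>
     (\<forall>x y. \<rho> x y = \<rho> y x) \<and>
     (\<forall>x y z. \<rho> x z \<le> \<rho> x y + \<rho> y z)"

definition translation_invariant :: "('a::real_vector \<Rightarrow> 'a \<Rightarrow> real) \<Rightarrow> bool" where
  "translation_invariant \<rho> \<longleftrightarrow> (\<forall>x y z. \<rho> (x + z) (y + z) = \<rho> x y)"

definition mconv :: "('a \<Rightarrow> 'a \<Rightarrow> real) \<Rightarrow> (nat \<Rightarrow> 'a) \<Rightarrow> 'a \<Rightarrow> bool" where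
  "mconv \<rho> xs x \<longleftrightarrow> (\<lambda>n. \<rho> (xs n) x) \<longlonglongrightarrow> 0"

definition mcauchy :: "('a \<Rightarrow> 'a \<Rightarrow> real) \<Rightarrow> (nat \<Rightarrow> 'a) \<Rightarrow> bool" where
  "mcauchy \<rho> xs \<longleftrightarrow> (\<forall>e>0. \<exists>N. \<forall>m\<ge>N. \<forall>n\<ge>N. \<rho> (xs m) (xs n) < e)"

text \<open>Metric vector space: metric, translation-invariant, and the vector operations are
  continuous (addition is automatically continuous by translation invariance; scalar
  multiplication \<open>\<real> \<times> X \<rightarrow> X\<close> is required to be jointly (sequentially) continuous).\<close>
definition metric_vector_space :: "('a::real_vector \<Rightarrow> 'a \<Rightarrow> real) \<Rightarrow> bool" where
  "metric_vector_space \<rho> \<longleftrightarrow>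
     metric_fun \<rho> \<and> translation_invariant \<rho> \<and>
     (\<forall>(ts::nat \<Rightarrow> real) t xs x. ts \<longlonglongrightarrow> t \<longrightarrow> mconv \<rho> xs x \<longrightarrow>
         mconv \<rho> (\<lambda>n. ts n *\<^sub>R xs n) (t *\<^sub>R x)) \<and>
     (\<forall>xs x ys y. mconv \<rho> xs x \<longrightarrow> mconv \<rho> ys y \<longrightarrow> mconv \<rho> (\<lambda>n. xs n + ys n) (x + y))"

definition F_space :: "('a::real_vector \<Rightarrow> 'a \<Rightarrow> real) \<Rightarrow> bool" where
  "F_space \<rho> \<longleftrightarrow> metric_vector_space \<rho> \<and> (\<forall>xs. mcauchy \<rho> xs \<longrightarrow> (\<exists>x. mconv \<rho> xs x))"

definition nondecreasing_metric :: "('a::real_vector \<Rightarrow> 'a \<Rightarrow> real) \<Rightarrow> bool" where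
  "nondecreasing_metric d \<longleftrightarrow> (\<forall>y (\<alpha>::real). 0 \<le> \<alpha> \<and> \<alpha> \<le> 1 \<longrightarrow> d (\<alpha> *\<^sub>R y) 0 \<le> d y 0)"

definition mcball :: "('a \<Rightarrow> 'a \<Rightarrow> real) \<Rightarrow> 'a \<Rightarrow> real \<Rightarrow> 'a set" where
  "mcball \<rho> x r = {z. \<rho> x z \<le> r}"

definition continuous_map_m ::
  "('a \<Rightarrow> 'a \<Rightarrow> real) \<Rightarrow> ('b \<Rightarrow> 'b \<Rightarrow> real) \<Rightarrow> ('a \<Rightarrow> 'b) \<Rightarrow> bool" where
  "continuous_map_m \<rho> d T \<longleftrightarrow> (\<forall>xs x. mconv \<rho> xs x \<longrightarrow> mconv d (\<lambda>n. T (xs n)) (T x))"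

definition continuous_linear_op ::
  "('a::real_vector \<Rightarrow> 'a \<Rightarrow> real) \<Rightarrow> ('b::real_vector \<Rightarrow> 'b \<Rightarrow> real) \<Rightarrow> ('a \<Rightarrow> 'b) \<Rightarrow> bool" where
  "continuous_linear_op \<rho> d T \<longleftrightarrow> linear T \<and> continuous_map_m \<rho> d T"

definition decr_null_seq :: "(nat \<Rightarrow> real) \<Rightarrow> bool" where
  "decr_null_seq \<epsilon> \<longleftrightarrow> (\<forall>n. 0 \<le> \<epsilon> n) \<and> (\<forall>n. \<epsilon> (Suc n) \<le> \<epsilon> n) \<and> \<epsilon> \<longlonglongrightarrow> 0"

definition conv_aas ::
  "('b \<Rightarrow> 'b \<Rightarrow> real) \<Rightarrow> (nat \<Rightarrow> 'a \<Rightarrow> 'b) \<Rightarrow> ('a \<Rightarrow> 'b) \<Rightarrow> bool" where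
  "conv_aas d Ts T \<longleftrightarrow>
     (\<forall>x. (\<lambda>n. d (Ts n x) (T x)) \<longlonglongrightarrow> 0) \<and>
     (\<forall>\<epsilon>. decr_null_seq \<epsilon> \<longrightarrow> (\<exists>x. \<exists>\<^sub>\<infinity>n. d (Ts n x) (T x) \<ge> \<epsilon> n))"

definition tvs_bounded :: "('a::real_vector \<Rightarrow> 'a \<Rightarrow> real) \<Rightarrow> 'a set \<Rightarrow> bool" where
  "tvs_bounded \<rho> A \<longleftrightarrow>
     (\<forall>r>0. \<exists>c>0. A \<subseteq> (\<lambda>z. c *\<^sub>R z) ` mcball \<rho> 0 r)"

definition locally_bounded :: "('a::real_vector \<Rightarrow> 'a \<Rightarrow> real) \<Rightarrow> bool" where
  "locally_bounded \<rho> \<longleftrightarrow>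
     (\<exists>U. (\<exists>r>0. mcball \<rho> 0 r \<subseteq> U) \<and> tvs_bounded \<rho> U)"

definition conv_bounded ::
  "('a::real_vector \<Rightarrow> 'a \<Rightarrow> real) \<Rightarrow> ('b \<Rightarrow> 'b \<Rightarrow> real) \<Rightarrow> (nat \<Rightarrow> 'a \<Rightarrow> 'b) \<Rightarrow> ('a \<Rightarrow> 'b) \<Rightarrow> bool" where
  "conv_bounded \<rho> d Ts T \<longleftrightarrow>
     (\<forall>A. tvs_bounded \<rho> A \<longrightarrow>
        (\<forall>e>0. \<exists>N. \<forall>n\<ge>N. \<forall>x\<in>A. d (Ts n x) (T x) < e))"

end

theory Submission
  imports Defs
begin

lemma mf_nonneg: assumes "metric_fun \<rho>" shows "0 \<le> \<rho> x y"
proof -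
  have "\<rho> x x \<le> \<rho> x y + \<rho> y x" using assms unfolding metric_fun_def by blast
  moreover have "\<rho> x x = 0" "\<rho> y x = \<rho> x y" using assms unfolding metric_fun_def by auto
  ultimately show ?thesis by linarith
qed

lemma mf_refl: assumes "metric_fun \<rho>" shows "\<rho> x x = 0"
  using assms unfolding metric_fun_def by auto

lemma mf_sym: assumes "metric_fun \<rho>" shows "\<rho> x y = \<rho> y x"
  using assms unfolding metric_fun_def by auto

lemma mf_tri: assumes "metric_fun \<rho>" shows "\<rho> x z \<le> \<rho> x y + \<rho> y z"
  using assms unfolding metric_fun_def by auto

lemma ti_diff: assumes "translation_invariant d" shows "d a b = d (a - b) 0"
  using assms unfolding translation_invariant_def by (metis add_0 diff_add_cancel)

lemma ti_add: assumes "translation_invariant d" shows "d (a + b) a = d b 0"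
  using assms unfolding translation_invariant_def by (metis add.commute add_0)

lemma mult_nat_bound:
  assumes "metric_fun d" "translation_invariant d"
  shows "d (real k *\<^sub>R z) 0 \<le> real k * d z 0"
proof (induction k)
  case 0 then show ?case using mf_refl[OF assms(1)] by simp
next
  case (Suc k)
  have "d (real (Suc k) *\<^sub>R z) 0 \<le> d (real (Suc k) *\<^sub>R z) z + d z 0"
    using mf_tri[OF assms(1)] by blast
  also have "d (real (Suc k) *\<^sub>R z) z = d (real k *\<^sub>R z) 0"
    using ti_diff[OF assms(2), of "real (Suc k) *\<^sub>R z" z] by (simp add: algebra_simps)
  finally show ?case using Suc by (simp add: algebra_simps)
qed

lemma mult_real_bound:
  assumes "metric_fun d" "translation_invariant d" "nondecreasing_metric d" "0 \<le> c"
  shows "d (c *\<^sub>R z) 0 \<le> real (nat \<lceil>c\<rceil> + 1) * d z 0"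
proof -
  define m where "m = real (nat \<lceil>c\<rceil> + 1)"
  have m: "m > 0" "c \<le> m" unfolding m_def using assms(4) by linarith+
  have "c *\<^sub>R z = (c / m) *\<^sub>R (m *\<^sub>R z)" using m by simp
  moreover have "d ((c / m) *\<^sub>R (m *\<^sub>R z)) 0 \<le> d (m *\<^sub>R z) 0"
  proof -
    have "0 \<le> c / m \<and> c / m \<le> 1" using m assms(4) by auto
    thus ?thesis using assms(3) unfolding nondecreasing_metric_def by blast
  qed
  ultimately have "d (c *\<^sub>R z) 0 \<le> d (m *\<^sub>R z) 0" by metis
  also have "\<dots> \<le> m * d z 0" unfolding m_def by (rule mult_nat_bound[OF assms(1,2)])
  finally show ?thesis unfolding m_def .
qed

lemma linear_test: "linear f \<Longrightarrow> f (c *\<^sub>R x) = c *\<^sub>R f x" "linear f \<Longrightarrow> f (x - y) = f x - f y"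
  "linear f \<Longrightarrow> f (x + y) = f x + f y" "linear f \<Longrightarrow> f 0 = 0"
  by (auto simp: linear_scale linear_diff linear_add linear_0)

lemma dominate:
  fixes f :: "nat \<Rightarrow> 'x \<Rightarrow> real"
  assumes bd: "\<And>n x. f n x \<le> M" and nn: "\<And>n x. 0 \<le> f n x"
    and null: "\<And>e. e > 0 \<Longrightarrow> \<exists>N. \<forall>n\<ge>N. \<forall>x. f n x \<le> e"
  shows "\<exists>\<epsilon>. decr_null_seq \<epsilon> \<and> (\<forall>n x. f n x \<le> \<epsilon> n)"
proof -
  define S where "S n = (\<lambda>p. f (fst p) (snd p)) ` {p. fst p \<ge> n}" for n
  define \<epsilon> where "\<epsilon> n = Sup (S n)" for n
  have ne: "S n \<noteq> {}" for n unfolding S_def by auto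
  have bdd: "bdd_above (S n)" for n unfolding S_def using bd by (auto intro!: bdd_aboveI)
  have up: "f k x \<le> \<epsilon> n" if "k \<ge> n" for k n x
    unfolding \<epsilon>_def by (rule cSup_upper[OF _ bdd]) (unfold S_def, rule image_eqI[of _ _ "(k,x)"], use that in auto)
  have mono: "\<epsilon> (Suc n) \<le> \<epsilon> n" for n
    unfolding \<epsilon>_def by (rule cSup_subset_mono[OF ne bdd]) (auto simp: S_def)
  have nn': "0 \<le> \<epsilon> n" for n using up[of n n] nn[of n] by (meson order_trans order_refl)
  have lim: "\<epsilon> \<longlonglongrightarrow> 0"
  proof (rule LIMSEQ_I)
    fix r :: real assume r: "0 < r"
    obtain N where N: "\<forall>n\<ge>N. \<forall>x. f n x \<le> r/2" using null[of "r/2"] r by auto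
    have "\<epsilon> n \<le> r/2" if "n \<ge> N" for n
      unfolding \<epsilon>_def by (rule cSup_least[OF ne]) (use N that in \<open>auto simp: S_def\<close>)
    thus "\<exists>no. \<forall>n\<ge>no. norm (\<epsilon> n - 0) < r" using nn' r by (auto intro!: exI[of _ N]) (smt (verit))
  qed
  show ?thesis unfolding decr_null_seq_def using nn' mono lim up by blast
qed

lemma cont_local_bound:
  assumes "metric_fun \<rho>" "continuous_map_m \<rho> d F" "F 0 = 0" "e > 0"
  shows "\<exists>r>0. \<forall>y. \<rho> 0 y \<le> r \<longrightarrow> d (F y) 0 \<le> e"
proof (rule ccontr)
  assume "\<not> ?thesis"
  hence "\<forall>k::nat. \<exists>y. \<rho> 0 y \<le> inverse (real (Suc k)) \<and> \<not> d (F y) 0 \<le> e"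
    by (metis of_nat_0_less_iff positive_imp_inverse_positive zero_less_Suc)
  then obtain ys where ys: "\<And>k. \<rho> 0 (ys k) \<le> inverse (real (Suc k))" "\<And>k. d (F (ys k)) 0 > e"
    by (metis not_le)
  have "mconv \<rho> ys 0" unfolding mconv_def
  proof (rule tendsto_sandwich[of "\<lambda>_. 0" _ _ "\<lambda>k. inverse (real (Suc k))"])
    show "\<forall>\<^sub>F n in sequentially. 0 \<le> \<rho> (ys n) 0" using mf_nonneg[OF assms(1)] by auto
    show "\<forall>\<^sub>F n in sequentially. \<rho> (ys n) 0 \<le> inverse (real (Suc n))"
      using ys(1) mf_sym[OF assms(1)] by auto
  qed (use LIMSEQ_inverse_real_of_nat in auto)
  hence "mconv d (\<lambda>k. F (ys k)) 0" using assms(2,3) unfolding continuous_map_m_def by metis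
  hence "eventually (\<lambda>k. d (F (ys k)) 0 < e) sequentially"
    unfolding mconv_def using assms(4) by (simp add: order_tendstoD(2))
  then obtain k where "d (F (ys k)) 0 < e" by (meson eventually_sequentially order_refl)
  with ys(2)[of k] show False by simp
qed

lemma baire_ball:
  fixes A :: "nat \<Rightarrow> 'x set"
  assumes mf: "metric_fun \<rho>" and cpl: "\<forall>xs. mcauchy \<rho> xs \<longrightarrow> (\<exists>x. mconv \<rho> xs x)"
    and cl: "\<And>N xs x. (\<forall>k. xs k \<in> A N) \<Longrightarrow> mconv \<rho> xs x \<Longrightarrow> x \<in> A N"
    and cov: "\<And>x. \<exists>N. x \<in> A N"
  shows "\<exists>N x0 r. r > 0 \<and> (\<forall>y. \<rho> x0 y < r \<longrightarrow> y \<in> A N)"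
proof -
  have ms: "Metric_space UNIV \<rho>"
  proof
    show "0 \<le> \<rho> x y" for x y by (rule mf_nonneg[OF mf])
    show "\<rho> x y = \<rho> y x" for x y by (rule mf_sym[OF mf])
    show "\<rho> x y = 0 \<longleftrightarrow> x = y" for x y using mf unfolding metric_fun_def by blast
    show "\<rho> x z \<le> \<rho> x y + \<rho> y z" for x y z by (rule mf_tri[OF mf])
  qed
  let ?X = "Metric_space.mtopology UNIV \<rho>"
  have lim: "limitin ?X \<sigma> l sequentially \<longleftrightarrow> mconv \<rho> \<sigma> l" for \<sigma> l
    by (simp add: Metric_space.limitin_metric_dist_null[OF ms] mconv_def)
  have mc: "Metric_space.mcomplete UNIV \<rho>"
    unfolding Metric_space.mcomplete_def[OF ms]
  proof (intro allI impI)
    fix \<sigma> assume "Metric_space.MCauchy UNIV \<rho> \<sigma>"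
    hence "mcauchy \<rho> \<sigma>" unfolding Metric_space.MCauchy_def[OF ms] mcauchy_def by (meson order_refl)
    then obtain x where "mconv \<rho> \<sigma> x" using cpl by blast
    thus "\<exists>x. limitin ?X \<sigma> x sequentially" using lim by blast
  qed
  have clo: "closedin ?X (A N)" for N
    unfolding Metric_space.metric_closedin_iff_sequentially_closed[OF ms] lim
  proof (intro conjI allI impI)
    fix \<sigma> l assume "range \<sigma> \<subseteq> A N \<and> mconv \<rho> \<sigma> l"
    thus "l \<in> A N" using cl[of \<sigma> N l] by auto
  qed simp
  have "\<exists>N. ?X interior_of (A N) \<noteq> {}"
  proof (rule ccontr)
    assume ne: "\<not> ?thesis"
    have "?X interior_of \<Union>(range A) = {}"
    proof (rule Metric_space.metric_Baire_category_alt[OF ms mc])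
      show "countable (range A)" by simp
      fix T assume "T \<in> range A"
      thus "closedin ?X T \<and> ?X interior_of T = {}" using clo ne by auto
    qed
    moreover have "\<Union>(range A) = UNIV" using cov by blast
    ultimately have "?X interior_of UNIV = {}" by simp
    moreover have "?X interior_of UNIV = UNIV"
      using Metric_space.topspace_mtopology[OF ms] interior_of_topspace[of ?X] by simp
    ultimately show False by simp
  qed
  then obtain N x0 where x0: "x0 \<in> ?X interior_of (A N)" by blast
  then obtain r where r: "r > 0" "Metric_space.mball UNIV \<rho> x0 r \<subseteq> ?X interior_of (A N)"
  proof -
    have "openin ?X (?X interior_of (A N))" by simp
    thus ?thesis using x0 that unfolding Metric_space.openin_mtopology[OF ms] by blast
  qed
  hence "\<forall>y. \<rho> x0 y < r \<longrightarrow> y \<in> A N"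
    using interior_of_subset[of ?X "A N"] Metric_space.in_mball[OF ms, of _ x0 r] by auto
  with r show ?thesis by blast
qed

lemma scale_small:
  assumes "metric_vector_space \<rho>" "r > 0"
  shows "\<exists>k. \<rho> (inverse (real (Suc k)) *\<^sub>R x) 0 < r"
proof -
  have mf: "metric_fun \<rho>" using assms(1) unfolding metric_vector_space_def by blast
  have "mconv \<rho> (\<lambda>k. x) x" unfolding mconv_def using mf_refl[OF mf] by simp
  hence "mconv \<rho> (\<lambda>k. inverse (real (Suc k)) *\<^sub>R x) (0 *\<^sub>R x)"
    using assms(1) LIMSEQ_inverse_real_of_nat unfolding metric_vector_space_def by blast
  hence "eventually (\<lambda>k. \<rho> (inverse (real (Suc k)) *\<^sub>R x) 0 < r) sequentially"
    unfolding mconv_def using assms(2) by (simp add: order_tendstoD(2))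
  thus ?thesis by (meson eventually_sequentially order_refl)
qed

lemma ii_bound:
  assumes mr: "metric_vector_space \<rho>" and md: "metric_vector_space d"
    and lT: "linear T" and lTs: "\<And>n. linear (Ts n)" and r0: "r0 > 0"
    and bd: "\<And>n x. \<rho> 0 x \<le> r0 \<Longrightarrow> d (Ts n x - T x) 0 \<le> \<epsilon> n"
  shows "\<exists>C\<ge>0. \<forall>n. d (Ts n x - T x) 0 \<le> C * \<epsilon> n"
proof -
  have mf: "metric_fun \<rho>" using mr unfolding metric_vector_space_def by blast
  have mfd: "metric_fun d" "translation_invariant d" using md unfolding metric_vector_space_def by blast+
  obtain k where k: "\<rho> (inverse (real (Suc k)) *\<^sub>R x) 0 < r0" using scale_small[OF mr r0] by blast
  define y where "y = inverse (real (Suc k)) *\<^sub>R x"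
  have xy: "x = real (Suc k) *\<^sub>R y" unfolding y_def by simp
  have y: "\<rho> 0 y \<le> r0" using k mf_sym[OF mf] unfolding y_def by (metis less_imp_le)
  have "d (Ts n x - T x) 0 \<le> real (Suc k) * \<epsilon> n" for n
  proof -
    have "Ts n x - T x = real (Suc k) *\<^sub>R (Ts n y - T y)"
      unfolding xy using lT lTs[of n] by (simp add: linear_scale scaleR_diff_right)
    hence "d (Ts n x - T x) 0 \<le> real (Suc k) * d (Ts n y - T y) 0"
      using mult_nat_bound[OF mfd] by metis
    also have "\<dots> \<le> real (Suc k) * \<epsilon> n" using bd[OF y] by simp
    finally show ?thesis .
  qed
  thus ?thesis by (intro exI[of _ "real (Suc k)"]) auto
qed

lemma ii_to_i:
  assumes mr: "metric_vector_space \<rho>" and md: "metric_vector_space d"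
    and lT: "linear T" and lTs: "\<And>n. linear (Ts n)" and r0: "r0 > 0"
    and eps: "decr_null_seq \<epsilon>"
    and bd: "\<And>n x. \<rho> 0 x \<le> r0 \<Longrightarrow> d (Ts n x - T x) 0 \<le> \<epsilon> n"
  shows "(\<forall>x. (\<lambda>n. d (Ts n x) (T x)) \<longlonglongrightarrow> 0) \<and> \<not> conv_aas d Ts T"
proof -
  have mfd: "metric_fun d" "translation_invariant d" using md unfolding metric_vector_space_def by blast+
  have eq: "d (Ts n x) (T x) = d (Ts n x - T x) 0" for n x using ti_diff[OF mfd(2)] by blast
  have e0: "\<epsilon> \<longlonglongrightarrow> 0" "\<And>n. 0 \<le> \<epsilon> n" "\<And>n. \<epsilon> (Suc n) \<le> \<epsilon> n"
    using eps unfolding decr_null_seq_def by auto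
  have pw: "(\<lambda>n. d (Ts n x) (T x)) \<longlonglongrightarrow> 0" for x
  proof -
    have "\<exists>C\<ge>0. \<forall>n. d (Ts n x - T x) 0 \<le> C * \<epsilon> n"
      by (rule ii_bound[OF mr md lT lTs r0]) (rule bd)
    then obtain C where C: "C \<ge> 0" "\<And>n. d (Ts n x - T x) 0 \<le> C * \<epsilon> n" by blast
    have h: "(\<lambda>n. C * \<epsilon> n) \<longlonglongrightarrow> 0" using tendsto_mult_right_zero[OF e0(1)] by simp
    show ?thesis unfolding eq
      by (rule tendsto_sandwich[OF _ _ tendsto_const h]) (use C mf_nonneg[OF mfd(1)] in auto)
  qed
  define \<delta> where "\<delta> n = sqrt (\<epsilon> n) + inverse (real (Suc n))" for n
  have dn: "decr_null_seq \<delta>" unfolding decr_null_seq_def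
  proof (intro conjI allI)
    show "0 \<le> \<delta> n" for n unfolding \<delta>_def using e0(2)[of n] by simp
    show "\<delta> (Suc n) \<le> \<delta> n" for n unfolding \<delta>_def
      using e0(3)[of n] by (intro add_mono real_sqrt_le_mono) (auto simp: field_simps)
    have "(\<lambda>n. sqrt (\<epsilon> n)) \<longlonglongrightarrow> sqrt 0" by (rule tendsto_real_sqrt[OF e0(1)])
    thus "\<delta> \<longlonglongrightarrow> 0" unfolding \<delta>_def using tendsto_add[OF _ LIMSEQ_inverse_real_of_nat] by fastforce
  qed
  have "\<exists>x. \<exists>\<^sub>\<infinity>n. d (Ts n x) (T x) \<ge> \<delta> n \<Longrightarrow> False"
  proof -
    assume "\<exists>x. \<exists>\<^sub>\<infinity>n. d (Ts n x) (T x) \<ge> \<delta> n"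
    then obtain x where fr: "\<exists>\<^sub>\<infinity>n. d (Ts n x) (T x) \<ge> \<delta> n" by blast
    have "\<exists>C\<ge>0. \<forall>n. d (Ts n x - T x) 0 \<le> C * \<epsilon> n"
      by (rule ii_bound[OF mr md lT lTs r0]) (rule bd)
    then obtain C where C: "C \<ge> 0" "\<And>n. d (Ts n x - T x) 0 \<le> C * \<epsilon> n" by blast
    have "(\<lambda>n. (C + 1) * sqrt (\<epsilon> n)) \<longlonglongrightarrow> (C+1) * sqrt 0"
      by (intro tendsto_mult tendsto_const tendsto_real_sqrt e0(1))
    hence "eventually (\<lambda>n. (C + 1) * sqrt (\<epsilon> n) < 1) sequentially"
      by (simp add: order_tendstoD(2))
    hence "eventually (\<lambda>n. d (Ts n x) (T x) < \<delta> n) sequentially"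
    proof (rule eventually_mono)
      fix n assume h: "(C + 1) * sqrt (\<epsilon> n) < 1"
      have s0: "0 \<le> sqrt (\<epsilon> n)" using e0(2) by simp
      have "C * \<epsilon> n = C * sqrt (\<epsilon> n) * sqrt (\<epsilon> n)" using e0(2)[of n]
        by (simp add: mult.assoc)
      also have "\<dots> \<le> (C + 1) * sqrt (\<epsilon> n) * sqrt (\<epsilon> n)"
        using s0 C(1) by (intro mult_right_mono mult_right_mono) auto
      also have "\<dots> \<le> 1 * sqrt (\<epsilon> n)" using h s0 by (intro mult_right_mono) auto
      also have "\<dots> < \<delta> n" unfolding \<delta>_def by simp
      finally show "d (Ts n x) (T x) < \<delta> n" using C(2)[of n] eq by simp
    qed
    hence "\<not> (\<exists>\<^sub>\<infinity>n. d (Ts n x) (T x) \<ge> \<delta> n)"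
      by (simp add: not_frequently not_le cofinite_eq_sequentially)
    with fr show False by blast
  qed
  hence "\<not> conv_aas d Ts T" unfolding conv_aas_def using dn by blast
  with pw show ?thesis by blast
qed

lemma ii_to_iii:
  assumes md: "metric_vector_space d" and nd: "nondecreasing_metric d"
    and lT: "linear T" and lTs: "\<And>n. linear (Ts n)"
    and eps: "decr_null_seq \<epsilon>" and True: "r0 > 0"
    and bd: "\<And>n x. \<rho> 0 x \<le> r0 \<Longrightarrow> d (Ts n x - T x) 0 \<le> \<epsilon> n"
  shows "conv_bounded \<rho> d Ts T"
  unfolding conv_bounded_def
proof (intro allI impI)
  fix A e assume A: "tvs_bounded \<rho> A" and e: "(e::real) > 0"
  have mfd: "metric_fun d" "translation_invariant d" using md unfolding metric_vector_space_def by blast+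
  have eq: "d (Ts n x) (T x) = d (Ts n x - T x) 0" for n x using ti_diff[OF mfd(2)] by blast
  have e0: "\<epsilon> \<longlonglongrightarrow> 0" using eps unfolding decr_null_seq_def by auto
  show "\<exists>N. \<forall>n\<ge>N. \<forall>x\<in>A. d (Ts n x) (T x) < e"
  proof -
    obtain c where c: "c > 0" "A \<subseteq> (\<lambda>z. c *\<^sub>R z) ` mcball \<rho> 0 r0"
      using A True unfolding tvs_bounded_def by blast
    define m where "m = real (nat \<lceil>c\<rceil> + 1)"
    have "(\<lambda>n. m * \<epsilon> n) \<longlonglongrightarrow> 0" using tendsto_mult_right_zero[OF e0] by simp
    hence "eventually (\<lambda>n. m * \<epsilon> n < e) sequentially" using e by (simp add: order_tendstoD(2))
    then obtain N where N: "\<And>n. n \<ge> N \<Longrightarrow> m * \<epsilon> n < e" by (meson eventually_sequentially)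
    have "d (Ts n x) (T x) < e" if n: "n \<ge> N" and x: "x \<in> A" for n x
    proof -
      obtain y where y: "\<rho> 0 y \<le> r0" "x = c *\<^sub>R y" using c(2) x unfolding mcball_def by auto
      have "Ts n x - T x = c *\<^sub>R (Ts n y - T y)"
        unfolding y(2) using lT lTs[of n] by (simp add: linear_scale scaleR_diff_right)
      hence "d (Ts n x - T x) 0 \<le> m * d (Ts n y - T y) 0"
        unfolding m_def using mult_real_bound[OF mfd nd, of c] c(1) by simp
      also have "\<dots> \<le> m * \<epsilon> n" using bd[OF y(1)] unfolding m_def by (intro mult_left_mono) auto
      also have "\<dots> < e" using N[OF n] .
      finally show ?thesis using eq by simp
    qed
    thus ?thesis by blast
  qed
qed

lemma diff_local_bound:
  assumes mf: "metric_fun \<rho>" and md: "metric_vector_space d"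
    and cT: "continuous_linear_op \<rho> d T" and cF: "continuous_linear_op \<rho> d F" and e: "e > 0"
  shows "\<exists>r>0. \<forall>y. \<rho> 0 y \<le> r \<longrightarrow> d (F y - T y) 0 \<le> e"
proof -
  have mfd: "metric_fun d" "translation_invariant d" using md unfolding metric_vector_space_def by blast+
  have "linear T" "linear F" "continuous_map_m \<rho> d T" "continuous_map_m \<rho> d F"
    using cT cF unfolding continuous_linear_op_def by auto
  moreover have "T 0 = 0" "F 0 = 0" using calculation by (auto simp: linear_0)
  ultimately obtain r1 r2 where r: "r1 > 0" "r2 > 0"
    "\<forall>y. \<rho> 0 y \<le> r1 \<longrightarrow> d (F y) 0 \<le> e/2" "\<forall>y. \<rho> 0 y \<le> r2 \<longrightarrow> d (T y) 0 \<le> e/2"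
    using cont_local_bound[OF mf, of d F "e/2"] cont_local_bound[OF mf, of d T "e/2"] e by auto
  have "d (F y - T y) 0 \<le> e" if "\<rho> 0 y \<le> min r1 r2" for y
  proof -
    have "d (F y - T y) 0 = d (F y) (T y)" using ti_diff[OF mfd(2)] by metis
    also have "\<dots> \<le> d (F y) 0 + d 0 (T y)" by (rule mf_tri[OF mfd(1)])
    also have "\<dots> = d (F y) 0 + d (T y) 0" using mf_sym[OF mfd(1)] by metis
    also have "\<dots> \<le> e/2 + e/2" using r that by (intro add_mono) auto
    finally show ?thesis by simp
  qed
  thus ?thesis using r by (intro exI[of _ "min r1 r2"]) auto
qed

lemma finite_bound:
  fixes N :: nat
  assumes mf: "metric_fun \<rho>" and md: "metric_vector_space d"
    and cT: "continuous_linear_op \<rho> d T" and cTs: "\<And>n. continuous_linear_op \<rho> d (Ts n)"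
  shows "\<exists>r>0. \<forall>n<N. \<forall>y. \<rho> 0 y \<le> r \<longrightarrow> d (Ts n y - T y) 0 \<le> 1"
proof (induction N)
  case 0 then show ?case by (intro exI[of _ 1]) auto
next
  case (Suc N)
  then obtain r where r: "r > 0" "\<forall>n<N. \<forall>y. \<rho> 0 y \<le> r \<longrightarrow> d (Ts n y - T y) 0 \<le> 1" by blast
  obtain r' where r': "r' > 0" "\<forall>y. \<rho> 0 y \<le> r' \<longrightarrow> d (Ts N y - T y) 0 \<le> 1"
    using diff_local_bound[OF mf md cT cTs[of N], of 1] by auto
  show ?case using r r' by (intro exI[of _ "min r r'"]) (auto simp: less_Suc_eq)
qed

lemma i_to_ii:
  assumes F: "F_space \<rho>" and md: "metric_vector_space d"
    and cT: "continuous_linear_op \<rho> d T" and cTs: "\<And>n. continuous_linear_op \<rho> d (Ts n)"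
    and pw: "\<forall>x. (\<lambda>n. d (Ts n x) (T x)) \<longlonglongrightarrow> 0" and naas: "\<not> conv_aas d Ts T"
  shows "\<exists>\<delta> r0. decr_null_seq \<delta> \<and> r0 > 0 \<and> (\<forall>n x. \<rho> 0 x \<le> r0 \<longrightarrow> d (Ts n x - T x) 0 \<le> \<delta> n)"
proof -
  have mr: "metric_vector_space \<rho>" and cpl: "\<forall>xs. mcauchy \<rho> xs \<longrightarrow> (\<exists>x. mconv \<rho> xs x)"
    using F unfolding F_space_def by auto
  have mf: "metric_fun \<rho>" "translation_invariant \<rho>" using mr unfolding metric_vector_space_def by blast+
  have mfd: "metric_fun d" "translation_invariant d" using md unfolding metric_vector_space_def by blast+
  have lT: "linear T" "continuous_map_m \<rho> d T" using cT unfolding continuous_linear_op_def by auto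
  have lTs: "linear (Ts n)" "continuous_map_m \<rho> d (Ts n)" for n
    using cTs[of n] unfolding continuous_linear_op_def by auto
  have eq: "d (Ts n x) (T x) = d (Ts n x - T x) 0" for n x using ti_diff[OF mfd(2)] by blast
  have "\<not> (\<forall>\<epsilon>. decr_null_seq \<epsilon> \<longrightarrow> (\<exists>x. \<exists>\<^sub>\<infinity>n. d (Ts n x) (T x) \<ge> \<epsilon> n))"
    using naas pw unfolding conv_aas_def by simp
  then obtain \<epsilon> where eps: "decr_null_seq \<epsilon>" and ev0: "\<not> (\<exists>x. \<exists>\<^sub>\<infinity>n. d (Ts n x) (T x) \<ge> \<epsilon> n)"
    by auto
  have ev: "\<not> (\<exists>\<^sub>\<infinity>n. d (Ts n x) (T x) \<ge> \<epsilon> n)" for x using ev0 by auto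
  have e0: "\<epsilon> \<longlonglongrightarrow> 0" "\<And>n. 0 \<le> \<epsilon> n" "decseq \<epsilon>"
    using eps unfolding decr_null_seq_def by (auto intro: decseq_SucI)
  define A where "A N = {x. \<forall>n\<ge>N. d (Ts n x) (T x) \<le> \<epsilon> n}" for N
  have cov: "\<exists>N. x \<in> A N" for x
  proof -
    have "eventually (\<lambda>n. d (Ts n x) (T x) < \<epsilon> n) sequentially"
      using ev[of x] by (simp add: not_frequently not_le cofinite_eq_sequentially)
    then obtain N where "\<forall>n\<ge>N. d (Ts n x) (T x) < \<epsilon> n" by (auto simp: eventually_sequentially)
    thus ?thesis unfolding A_def by (auto intro!: exI[of _ N] less_imp_le)
  qed
  have cl: "x \<in> A N" if xs: "\<forall>k. xs k \<in> A N" and cx: "mconv \<rho> xs x" for N xs x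
  proof -
    have "d (Ts n x) (T x) \<le> \<epsilon> n" if n: "n \<ge> N" for n
    proof -
      have c1: "(\<lambda>k. d (Ts n (xs k)) (Ts n x)) \<longlonglongrightarrow> 0" using lTs(2)[of n] cx
        unfolding continuous_map_m_def mconv_def by blast
      have c2: "(\<lambda>k. d (T (xs k)) (T x)) \<longlonglongrightarrow> 0" using lT(2) cx
        unfolding continuous_map_m_def mconv_def by blast
      have lim: "(\<lambda>k. \<epsilon> n + (d (Ts n (xs k)) (Ts n x) + d (T (xs k)) (T x))) \<longlonglongrightarrow> \<epsilon> n + (0 + 0)"
        by (intro tendsto_add tendsto_const c1 c2)
      have "d (Ts n x) (T x) \<le> \<epsilon> n + (d (Ts n (xs k)) (Ts n x) + d (T (xs k)) (T x))" for k
      proof -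
        have "d (Ts n x) (T x) \<le> d (Ts n x) (Ts n (xs k)) + d (Ts n (xs k)) (T x)" by (rule mf_tri[OF mfd(1)])
        also have "d (Ts n (xs k)) (T x) \<le> d (Ts n (xs k)) (T (xs k)) + d (T (xs k)) (T x)" by (rule mf_tri[OF mfd(1)])
        also have "d (Ts n (xs k)) (T (xs k)) \<le> \<epsilon> n" using xs n unfolding A_def by blast
        finally show ?thesis using mf_sym[OF mfd(1)] by (simp add: add_ac)
      qed
      hence "d (Ts n x) (T x) \<le> \<epsilon> n + (0 + 0)"
        by (intro tendsto_le[OF trivial_limit_sequentially lim tendsto_const]) auto
      thus ?thesis by simp
    qed
    thus ?thesis unfolding A_def by blast
  qed
  have "\<exists>N x0 r. r > 0 \<and> (\<forall>y. \<rho> x0 y < r \<longrightarrow> y \<in> A N)"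
  proof (rule baire_ball[OF mf(1) cpl])
    fix N xs x assume "\<forall>k. xs k \<in> A N" "mconv \<rho> xs x"
    thus "x \<in> A N" by (rule cl)
  next
    fix x show "\<exists>N. x \<in> A N" by (rule cov)
  qed
  then obtain N x0 r where r: "r > 0" "\<forall>y. \<rho> x0 y < r \<longrightarrow> y \<in> A N" by blast
  have big: "d (Ts n y - T y) 0 \<le> 2 * \<epsilon> n" if y: "\<rho> 0 y \<le> r/2" and n: "n \<ge> N" for n y
  proof -
    have h: "\<rho> (0 + x0) (y + x0) = \<rho> 0 y" using mf(2) unfolding translation_invariant_def by blast
    have c: "x0 + y = y + x0" by (rule add.commute)
    have "\<rho> x0 (x0 + y) = \<rho> 0 y" using h by (simp only: add_0_left c)
    hence "x0 + y \<in> A N" "x0 \<in> A N" using r y mf_refl[OF mf(1)] by auto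
    hence h1: "d (Ts n (x0 + y) - T (x0 + y)) 0 \<le> \<epsilon> n" and h2: "d (Ts n x0 - T x0) 0 \<le> \<epsilon> n"
      using n eq unfolding A_def by auto
    have "Ts n y - T y = (Ts n (x0 + y) - T (x0 + y)) - (Ts n x0 - T x0)"
      using lT(1) lTs(1)[of n] by (simp add: linear_add)
    hence "d (Ts n y - T y) 0 = d (Ts n (x0 + y) - T (x0 + y)) (Ts n x0 - T x0)"
      by (simp add: ti_diff[OF mfd(2), of "Ts n (x0 + y) - T (x0 + y)" "Ts n x0 - T x0"])
    also have "\<dots> \<le> d (Ts n (x0 + y) - T (x0 + y)) 0 + d 0 (Ts n x0 - T x0)" by (rule mf_tri[OF mfd(1)])
    also have "\<dots> \<le> 2 * \<epsilon> n" using h1 h2 mf_sym[OF mfd(1), of 0 "Ts n x0 - T x0"] by simp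
    finally show ?thesis .
  qed
  have "\<exists>r1>0. \<forall>n<N. \<forall>y. \<rho> 0 y \<le> r1 \<longrightarrow> d (Ts n y - T y) 0 \<le> 1"
    by (rule finite_bound[OF mf(1) md cT]) (rule cTs)
  then obtain r1 where r1: "r1 > 0" "\<forall>n<N. \<forall>y. \<rho> 0 y \<le> r1 \<longrightarrow> d (Ts n y - T y) 0 \<le> 1"
    by blast
  define r' where "r' = min (r/2) r1"
  have r'0: "r' > 0" unfolding r'_def using r r1 by auto
  define f where "f n y = (if \<rho> 0 y \<le> r' then d (Ts n y - T y) 0 else 0)" for n y
  have fb: "f n y \<le> 1 + 2 * \<epsilon> 0" for n y
  proof (cases "\<rho> 0 y \<le> r'")
    case False thus ?thesis unfolding f_def using e0(2)[of 0] by simp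
  next
    case True
    note yr = True
    hence y1: "\<rho> 0 y \<le> r1" and y2: "\<rho> 0 y \<le> r/2" unfolding r'_def by auto
    show ?thesis
    proof (cases "n < N")
      case True
      hence "d (Ts n y - T y) 0 \<le> 1" using r1(2) y1 by blast
      thus ?thesis unfolding f_def using e0(2)[of 0] yr by simp
    next
      case False
      hence "d (Ts n y - T y) 0 \<le> 2 * \<epsilon> n" using big[OF y2] by simp
      moreover have "\<epsilon> n \<le> \<epsilon> 0" using e0(3) by (simp add: decseqD)
      ultimately show ?thesis unfolding f_def using yr by simp
    qed
  qed
  have fnn: "0 \<le> f n y" for n y unfolding f_def using mf_nonneg[OF mfd(1)] by auto
  have fnull: "\<exists>N'. \<forall>n\<ge>N'. \<forall>y. f n y \<le> e" if e: "e > 0" for e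
  proof -
    have "(\<lambda>n. 2 * \<epsilon> n) \<longlonglongrightarrow> 0" using tendsto_mult_right_zero[OF e0(1)] by simp
    from order_tendstoD(2)[OF this e] have "eventually (\<lambda>n. 2 * \<epsilon> n < e) sequentially" .
    then obtain N1 where N1: "\<And>n. n \<ge> N1 \<Longrightarrow> 2 * \<epsilon> n < e" by (meson eventually_sequentially)
    have "f n y \<le> e" if n: "n \<ge> max N N1" for n y
    proof (cases "\<rho> 0 y \<le> r'")
      case True
      hence "\<rho> 0 y \<le> r/2" unfolding r'_def by simp
      hence "d (Ts n y - T y) 0 \<le> 2 * \<epsilon> n" using big n by simp
      thus ?thesis unfolding f_def using True N1[of n] n by simp
    next
      case False thus ?thesis unfolding f_def using e by simp
    qed
    thus ?thesis by blast
  qed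
  obtain \<delta> where \<delta>: "decr_null_seq \<delta>" "\<forall>n y. f n y \<le> \<delta> n"
    using dominate[of f, OF fb fnn fnull] by blast
  have "\<forall>n x. \<rho> 0 x \<le> r' \<longrightarrow> d (Ts n x - T x) 0 \<le> \<delta> n"
  proof (intro allI impI)
    fix n x assume "\<rho> 0 x \<le> r'"
    thus "d (Ts n x - T x) 0 \<le> \<delta> n" using \<delta>(2)[rule_format, of n x] unfolding f_def by simp
  qed
  with \<delta>(1) r'0 show ?thesis by blast
qed

lemma iii_to_ii:
  assumes mf: "metric_fun \<rho>" and md: "metric_vector_space d"
    and cT: "continuous_linear_op \<rho> d T" and cTs: "\<And>n. continuous_linear_op \<rho> d (Ts n)"
    and lb: "locally_bounded \<rho>" and cb: "conv_bounded \<rho> d Ts T"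
  shows "\<exists>\<delta> r0. decr_null_seq \<delta> \<and> r0 > 0 \<and> (\<forall>n x. \<rho> 0 x \<le> r0 \<longrightarrow> d (Ts n x - T x) 0 \<le> \<delta> n)"
proof -
  have mfd: "metric_fun d" "translation_invariant d" using md unfolding metric_vector_space_def by blast+
  have eq: "d (Ts n x) (T x) = d (Ts n x - T x) 0" for n x using ti_diff[OF mfd(2)] by blast
  obtain U r where U: "r > 0" "mcball \<rho> 0 r \<subseteq> U" "tvs_bounded \<rho> U"
    using lb unfolding locally_bounded_def by blast
  have uni: "\<exists>N. \<forall>n\<ge>N. \<forall>x\<in>U. d (Ts n x) (T x) < e" if "e > 0" for e
    using cb U(3) that unfolding conv_bounded_def by blast
  obtain N where N: "\<forall>n\<ge>N. \<forall>x\<in>U. d (Ts n x) (T x) < 1" using uni[of 1] by auto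
  have "\<exists>r1>0. \<forall>n<N. \<forall>y. \<rho> 0 y \<le> r1 \<longrightarrow> d (Ts n y - T y) 0 \<le> 1"
    by (rule finite_bound[OF mf md cT]) (rule cTs)
  then obtain r1 where r1: "r1 > 0" "\<forall>n<N. \<forall>y. \<rho> 0 y \<le> r1 \<longrightarrow> d (Ts n y - T y) 0 \<le> 1"
    by blast
  define r' where "r' = min r r1"
  have r'0: "r' > 0" unfolding r'_def using U r1 by auto
  have inU: "\<rho> 0 y \<le> r' \<Longrightarrow> y \<in> U" for y using U(2) unfolding mcball_def r'_def by auto
  define f where "f n y = (if \<rho> 0 y \<le> r' then d (Ts n y - T y) 0 else 0)" for n y
  have fb: "f n y \<le> 1" for n y
  proof (cases "\<rho> 0 y \<le> r'")
    case False thus ?thesis unfolding f_def by simp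
  next
    case True
    note yr = True
    show ?thesis
    proof (cases "n < N")
      case True
      hence "d (Ts n y - T y) 0 \<le> 1" using r1(2) yr unfolding r'_def by simp
      thus ?thesis unfolding f_def using yr by simp
    next
      case False
      hence "d (Ts n y - T y) 0 < 1" using N inU[OF yr] eq by simp
      thus ?thesis unfolding f_def using yr by simp
    qed
  qed
  have fnn: "0 \<le> f n y" for n y unfolding f_def using mf_nonneg[OF mfd(1)] by auto
  have fnull: "\<exists>N'. \<forall>n\<ge>N'. \<forall>y. f n y \<le> e" if e: "e > 0" for e
  proof -
    obtain N1 where N1: "\<forall>n\<ge>N1. \<forall>x\<in>U. d (Ts n x) (T x) < e" using uni[OF e] by blast
    have "f n y \<le> e" if n: "n \<ge> N1" for n y
    proof (cases "\<rho> 0 y \<le> r'")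
      case True
      hence "d (Ts n y - T y) 0 < e" using N1 n inU[OF True] eq by simp
      thus ?thesis unfolding f_def using True by simp
    next
      case False thus ?thesis unfolding f_def using e by simp
    qed
    thus ?thesis by blast
  qed
  obtain \<delta> where \<delta>: "decr_null_seq \<delta>" "\<forall>n y. f n y \<le> \<delta> n"
    using dominate[of f, OF fb fnn fnull] by blast
  have "\<forall>n x. \<rho> 0 x \<le> r' \<longrightarrow> d (Ts n x - T x) 0 \<le> \<delta> n"
  proof (intro allI impI)
    fix n x assume "\<rho> 0 x \<le> r'"
    thus "d (Ts n x - T x) 0 \<le> \<delta> n" using \<delta>(2)[rule_format, of n x] unfolding f_def by simp
  qed
  with \<delta>(1) r'0 show ?thesis by blast
qed

theorem mainTheorem10:
  fixes \<rho> :: "'a::real_vector \<Rightarrow> 'a \<Rightarrow> real"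
    and d :: "'b::real_vector \<Rightarrow> 'b \<Rightarrow> real"
    and T :: "'a \<Rightarrow> 'b" and Ts :: "nat \<Rightarrow> 'a \<Rightarrow> 'b"
  assumes "F_space \<rho>"
    and "metric_vector_space d" and "nondecreasing_metric d"
    and "continuous_linear_op \<rho> d T"
    and "\<And>n. continuous_linear_op \<rho> d (Ts n)"
  shows "(((\<forall>x. (\<lambda>n. d (Ts n x) (T x)) \<longlonglongrightarrow> 0) \<and> \<not> conv_aas d Ts T) \<longleftrightarrow>
           (\<exists>\<epsilon> r0. decr_null_seq \<epsilon> \<and> r0 > 0 \<and>
              (\<forall>n. (\<lambda>x. Ts n x - T x) ` mcball \<rho> 0 r0 \<subseteq> mcball d 0 (\<epsilon> n))))
     \<and> (((\<forall>x. (\<lambda>n. d (Ts n x) (T x)) \<longlonglongrightarrow> 0) \<and> \<not> conv_aas d Ts T) \<longrightarrow>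
           conv_bounded \<rho> d Ts T)
     \<and> (locally_bounded \<rho> \<longrightarrow>
          (((\<forall>x. (\<lambda>n. d (Ts n x) (T x)) \<longlonglongrightarrow> 0) \<and> \<not> conv_aas d Ts T) \<longleftrightarrow>
           conv_bounded \<rho> d Ts T))"
proof -
  have mr: "metric_vector_space \<rho>" using assms(1) unfolding F_space_def by blast
  have mf: "metric_fun \<rho>" using mr unfolding metric_vector_space_def by blast
  have mfd: "metric_fun d" using assms(2) unfolding metric_vector_space_def by blast
  have lT: "linear T" using assms(4) unfolding continuous_linear_op_def by blast
  have lTs: "linear (Ts n)" for n using assms(5)[of n] unfolding continuous_linear_op_def by blast
  let ?P = "(\<forall>x. (\<lambda>n. d (Ts n x) (T x)) \<longlonglongrightarrow> 0) \<and> \<not> conv_aas d Ts T"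
  let ?Q = "\<exists>\<epsilon> r0. decr_null_seq \<epsilon> \<and> r0 > 0 \<and>
              (\<forall>n. (\<lambda>x. Ts n x - T x) ` mcball \<rho> 0 r0 \<subseteq> mcball d 0 (\<epsilon> n))"
  let ?Q' = "\<exists>\<delta> r0. decr_null_seq \<delta> \<and> r0 > 0 \<and> (\<forall>n x. \<rho> 0 x \<le> r0 \<longrightarrow> d (Ts n x - T x) 0 \<le> \<delta> n)"
  have QQ: "?Q \<longleftrightarrow> ?Q'"
    unfolding mcball_def using mf_sym[OF mfd] by (auto simp: image_subset_iff)
  have PQ: "?Q'" if "?P"
    by (rule i_to_ii[OF assms(1,2,4)]) (use assms(5) that in auto)
  have QP: "?P" if "?Q'"
  proof -
    from that obtain \<delta> r0 where h: "decr_null_seq \<delta>" "r0 > 0"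
      "\<And>n x. \<rho> 0 x \<le> r0 \<Longrightarrow> d (Ts n x - T x) 0 \<le> \<delta> n" by blast
    show ?thesis by (rule ii_to_i[OF mr assms(2) lT]) (use lTs h in auto)
  qed
  have QB: "conv_bounded \<rho> d Ts T" if "?Q'"
  proof -
    from that obtain \<delta> r0 where h: "decr_null_seq \<delta>" "r0 > 0"
      "\<And>n x. \<rho> 0 x \<le> r0 \<Longrightarrow> d (Ts n x - T x) 0 \<le> \<delta> n" by blast
    show ?thesis by (rule ii_to_iii[OF assms(2,3) lT]) (use lTs h in auto)
  qed
  have BQ: "?Q'" if "locally_bounded \<rho>" "conv_bounded \<rho> d Ts T"
    by (rule iii_to_ii[OF mf assms(2,4)]) (use assms(5) that in auto)
  show ?thesis using PQ QP QB BQ QQ by blast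
qed

end
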